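(* Let $A\to M$ be a vector bundle of rank at least $n$. Let $\widehat{\xi}^1,\dots,\widehat{\xi}^n\in\Gamma(A^* )$ be linearly independent over $C^\infty(M)$ and let $\widehat{X}_1,\dots,\widehat{X}_n$ be covariant differential operators on $A$ with symbols $\widehat{x}_1,\dots,\widehat{x}_n\in\Gamma(TM)$. Define $a_A(y)=\sum_i\langle y,\widehat{\xi}^i\rangle\widehat{x}_i$ and $$[y,z]_A=\sum_{i=1}^n\Big(\langle y,\widehat{\xi}^i\rangle\widehat{X}_i(z)-\langle z,\widehat{\xi}^i\rangle\widehat{X}_i(y)\Big),\qquad y,z\in\Gamma(A).$$ Suppose there are $a_{ik}^j\in C^\infty(M)$ such that for all $i,j$ $$\widehat{X}_i(\widehat{\xi}^j)=\sum_k a_{ik}^j\widehat{\xi}^k,\qquad [\widehat{x}_i,\widehat{x}_j]=\sum_k\big(a_{ji}^k-a_{ij}^k\big)\widehat{x}_k .$$ Then $(A,[\cdot,\cdot]_A,a_A)$ is a dull algebroid.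
   Context: A covariant differential operator on $A$ is an $\mathbb{R}$-linear map $\widehat{X}:\Gamma(A)\to\Gamma(A)$ with a vector field $\widehat{x}$ (its symbol) such that $\widehat{X}(fy)=f\widehat{X}(y)+\widehat{x}(f)y$; it acts on $\Gamma(A^* )$ by $\langle\widehat{X}(\xi),y\rangle=\widehat{x}\langle\xi,y\rangle-\langle\xi,\widehat{X}(y)\rangle$. A dull algebroid is a triple $(A,[\cdot,\cdot],a_A)$ with $a_A:A\to TM$ a bundle map and $[\cdot,\cdot]$ a skew-symmetric $\mathbb{R}$-bilinear bracket on $\Gamma(A)$ satisfying $[x,fy]=f[x,y]+a_A(x)(f)y$ and $a_A([x,y])=[a_A(x),a_A(y)]$. *)

theory Defs
  imports Main "HOL.Real_Vector_Spaces"
begin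

text \<open>Points of M are the elements of type 'm.  C is the algebra of smooth functions
  (a unital subalgebra of the real-valued functions on M).  Sections of A are
  maps 'm \<Rightarrow> 'v into a fixed real vector space (A viewed inside M \<times> V); the set G
  of smooth sections is a C-module.  Sections of A* are the C-linear maps G \<rightarrow> C
  (the pairing is application).  Vector fields are derivations of C.\<close>

definition smooth_algebra :: "('m \<Rightarrow> real) set \<Rightarrow> bool" where
  "smooth_algebra C \<longleftrightarrow> (\<forall>c. (\<lambda>_. c) \<in> C) \<and>
     (\<forall>f\<in>C. \<forall>g\<in>C. (\<lambda>p. f p + g p) \<in> C \<and> (\<lambda>p. f p * g p) \<in> C)"

definition smul :: "('m \<Rightarrow> real) \<Rightarrow> ('m \<Rightarrow> 'v::real_vector) \<Rightarrow> ('m \<Rightarrow> 'v)" where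
  "smul f y = (\<lambda>p. f p *\<^sub>R y p)"

definition section_module :: "('m \<Rightarrow> real) set \<Rightarrow> ('m \<Rightarrow> 'v::real_vector) set \<Rightarrow> bool" where
  "section_module C G \<longleftrightarrow> (\<lambda>_. 0) \<in> G \<and> (\<forall>y\<in>G. \<forall>z\<in>G. (\<lambda>p. y p + z p) \<in> G) \<and>
     (\<forall>f\<in>C. \<forall>y\<in>G. smul f y \<in> G)"

definition dual_section ::
  "('m \<Rightarrow> real) set \<Rightarrow> ('m \<Rightarrow> 'v::real_vector) set \<Rightarrow> (('m \<Rightarrow> 'v) \<Rightarrow> ('m \<Rightarrow> real)) \<Rightarrow> bool" where
  "dual_section C G \<xi> \<longleftrightarrow> (\<forall>y\<in>G. \<xi> y \<in> C) \<and>
     (\<forall>f\<in>C. \<forall>y\<in>G. \<forall>z\<in>G. \<xi> (\<lambda>p. f p *\<^sub>R y p + z p) = (\<lambda>p. f p * \<xi> y p + \<xi> z p))"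

definition vector_field :: "('m \<Rightarrow> real) set \<Rightarrow> (('m \<Rightarrow> real) \<Rightarrow> ('m \<Rightarrow> real)) \<Rightarrow> bool" where
  "vector_field C x \<longleftrightarrow> (\<forall>f\<in>C. x f \<in> C) \<and>
     (\<forall>c::real. \<forall>f\<in>C. \<forall>g\<in>C. x (\<lambda>p. c * f p + g p) = (\<lambda>p. c * x f p + x g p)) \<and>
     (\<forall>f\<in>C. \<forall>g\<in>C. x (\<lambda>p. f p * g p) = (\<lambda>p. f p * x g p + g p * x f p))"

definition lie_bracket ::
  "(('m \<Rightarrow> real) \<Rightarrow> ('m \<Rightarrow> real)) \<Rightarrow> (('m \<Rightarrow> real) \<Rightarrow> ('m \<Rightarrow> real)) \<Rightarrow> (('m \<Rightarrow> real) \<Rightarrow> ('m \<Rightarrow> real))" where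
  "lie_bracket x y = (\<lambda>f p. x (y f) p - y (x f) p)"

definition vf_eq ::
  "('m \<Rightarrow> real) set \<Rightarrow> (('m \<Rightarrow> real) \<Rightarrow> ('m \<Rightarrow> real)) \<Rightarrow> (('m \<Rightarrow> real) \<Rightarrow> ('m \<Rightarrow> real)) \<Rightarrow> bool" where
  "vf_eq C x y \<longleftrightarrow> (\<forall>f\<in>C. x f = y f)"

definition covariant_diff_op ::
  "('m \<Rightarrow> real) set \<Rightarrow> ('m \<Rightarrow> 'v::real_vector) set \<Rightarrow> (('m \<Rightarrow> 'v) \<Rightarrow> ('m \<Rightarrow> 'v))
   \<Rightarrow> (('m \<Rightarrow> real) \<Rightarrow> ('m \<Rightarrow> real)) \<Rightarrow> bool" where
  "covariant_diff_op C G X xh \<longleftrightarrow> vector_field C xh \<and> (\<forall>y\<in>G. X y \<in> G) \<and>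
     (\<forall>c::real. \<forall>y\<in>G. \<forall>z\<in>G. X (\<lambda>p. c *\<^sub>R y p + z p) = (\<lambda>p. c *\<^sub>R X y p + X z p)) \<and>
     (\<forall>f\<in>C. \<forall>y\<in>G. X (smul f y) = (\<lambda>p. f p *\<^sub>R X y p + xh f p *\<^sub>R y p))"

definition dual_action ::
  "(('m \<Rightarrow> 'v::real_vector) \<Rightarrow> ('m \<Rightarrow> 'v)) \<Rightarrow> (('m \<Rightarrow> real) \<Rightarrow> ('m \<Rightarrow> real))
   \<Rightarrow> (('m \<Rightarrow> 'v) \<Rightarrow> ('m \<Rightarrow> real)) \<Rightarrow> (('m \<Rightarrow> 'v) \<Rightarrow> ('m \<Rightarrow> real))" where
  "dual_action X xh \<xi> = (\<lambda>y p. xh (\<xi> y) p - \<xi> (X y) p)"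

definition lin_indep_dual ::
  "('m \<Rightarrow> real) set \<Rightarrow> ('m \<Rightarrow> 'v::real_vector) set \<Rightarrow> nat \<Rightarrow> (nat \<Rightarrow> ('m \<Rightarrow> 'v) \<Rightarrow> ('m \<Rightarrow> real)) \<Rightarrow> bool" where
  "lin_indep_dual C G n \<xi> \<longleftrightarrow>
     (\<forall>c. (\<forall>i<n. c i \<in> C) \<longrightarrow> (\<forall>y\<in>G. (\<lambda>p. \<Sum>i<n. c i p * \<xi> i y p) = (\<lambda>_. 0))
        \<longrightarrow> (\<forall>i<n. c i = (\<lambda>_. 0)))"

definition dull_algebroid ::
  "('m \<Rightarrow> real) set \<Rightarrow> ('m \<Rightarrow> 'v::real_vector) set \<Rightarrow> (('m \<Rightarrow> 'v) \<Rightarrow> ('m \<Rightarrow> 'v) \<Rightarrow> ('m \<Rightarrow> 'v))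
   \<Rightarrow> (('m \<Rightarrow> 'v) \<Rightarrow> (('m \<Rightarrow> real) \<Rightarrow> ('m \<Rightarrow> real))) \<Rightarrow> bool" where
  "dull_algebroid C G br anc \<longleftrightarrow>
     (\<forall>y\<in>G. \<forall>z\<in>G. br y z \<in> G) \<and>
     (\<forall>y\<in>G. \<forall>z\<in>G. br y z = (\<lambda>p. - br z y p)) \<and>
     (\<forall>c::real. \<forall>y\<in>G. \<forall>y'\<in>G. \<forall>z\<in>G.
        br (\<lambda>p. c *\<^sub>R y p + y' p) z = (\<lambda>p. c *\<^sub>R br y z p + br y' z p)) \<and>
     (\<forall>c::real. \<forall>y\<in>G. \<forall>z\<in>G. \<forall>z'\<in>G.
        br y (\<lambda>p. c *\<^sub>R z p + z' p) = (\<lambda>p. c *\<^sub>R br y z p + br y z' p)) \<and>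
     (\<forall>y\<in>G. vector_field C (anc y)) \<and>
     (\<forall>f\<in>C. \<forall>y\<in>G. \<forall>z\<in>G.
        vf_eq C (anc (\<lambda>p. f p *\<^sub>R y p + z p)) (\<lambda>g p. f p * anc y g p + anc z g p)) \<and>
     (\<forall>f\<in>C. \<forall>y\<in>G. \<forall>z\<in>G.
        br y (smul f z) = (\<lambda>p. f p *\<^sub>R br y z p + anc y f p *\<^sub>R z p)) \<and>
     (\<forall>y\<in>G. \<forall>z\<in>G. vf_eq C (anc (br y z)) (lie_bracket (anc y) (anc z)))"

end

theory Submission imports Defs begin

lemma C_const: "smooth_algebra C \<Longrightarrow> (\<lambda>_. c) \<in> C" by (simp add: smooth_algebra_def)
lemma C_add: "smooth_algebra C \<Longrightarrow> f \<in> C \<Longrightarrow> g \<in> C \<Longrightarrow> (\<lambda>p. f p + g p) \<in> C" by (simp add: smooth_algebra_def)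
lemma C_mult: "smooth_algebra C \<Longrightarrow> f \<in> C \<Longrightarrow> g \<in> C \<Longrightarrow> (\<lambda>p. f p * g p) \<in> C" by (simp add: smooth_algebra_def)
lemma C_sum: assumes "smooth_algebra C" "finite S" "\<forall>i\<in>S. f i \<in> C" shows "(\<lambda>p. \<Sum>i\<in>S. f i p) \<in> C"
  using assms(2,3)
proof (induction S rule: finite_induct)
  case empty then show ?case using C_const[OF assms(1), of 0] by simp
next
  case (insert x F) then show ?case using C_add[OF assms(1), of "f x" "\<lambda>p. \<Sum>i\<in>F. f i p"] by simp
qed

lemma G_zero: "section_module C G \<Longrightarrow> (\<lambda>_. 0) \<in> G" by (simp add: section_module_def)
lemma G_add: "section_module C G \<Longrightarrow> y \<in> G \<Longrightarrow> z \<in> G \<Longrightarrow> (\<lambda>p. y p + z p) \<in> G" by (simp add: section_module_def)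
lemma G_smul: "section_module C G \<Longrightarrow> f \<in> C \<Longrightarrow> y \<in> G \<Longrightarrow> (\<lambda>p. f p *\<^sub>R y p) \<in> G"
  by (simp add: section_module_def smul_def)
lemma G_diff: assumes "smooth_algebra C" "section_module C G" "y \<in> G" "z \<in> G" shows "(\<lambda>p. y p - z p) \<in> G"
proof -
  have "(\<lambda>p. (\<lambda>_. -1) p *\<^sub>R z p) \<in> G" by (rule G_smul[OF assms(2) C_const[OF assms(1)] assms(4)])
  from G_add[OF assms(2) assms(3) this] show ?thesis by simp
qed
lemma G_sum: assumes "section_module C G" "finite S" "\<forall>i\<in>S. f i \<in> G" shows "(\<lambda>p. \<Sum>i\<in>S. f i p) \<in> G"
  using assms(2,3)
proof (induction S rule: finite_induct)
  case empty then show ?case using G_zero[OF assms(1)] by simp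
next
  case (insert x F) then show ?case using G_add[OF assms(1), of "f x" "\<lambda>p. \<Sum>i\<in>F. f i p"] by simp
qed

lemma ds_in: "dual_section C G \<xi> \<Longrightarrow> y \<in> G \<Longrightarrow> \<xi> y \<in> C" by (simp add: dual_section_def)
lemma ds_lin: "dual_section C G \<xi> \<Longrightarrow> f \<in> C \<Longrightarrow> y \<in> G \<Longrightarrow> z \<in> G \<Longrightarrow>
   \<xi> (\<lambda>p. f p *\<^sub>R y p + z p) = (\<lambda>p. f p * \<xi> y p + \<xi> z p)" by (simp add: dual_section_def)
lemma ds_add: assumes "smooth_algebra C" "dual_section C G \<xi>" "y \<in> G" "z \<in> G"
  shows "\<xi> (\<lambda>p. y p + z p) = (\<lambda>p. \<xi> y p + \<xi> z p)"
  using ds_lin[OF assms(2) C_const[OF assms(1), of 1] assms(3,4)] by simp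
lemma ds_diff: assumes "smooth_algebra C" "dual_section C G \<xi>" "y \<in> G" "z \<in> G"
  shows "\<xi> (\<lambda>p. y p - z p) = (\<lambda>p. \<xi> y p - \<xi> z p)"
  using ds_lin[OF assms(2) C_const[OF assms(1), of "-1"] assms(4,3)] by (simp add: algebra_simps)
lemma ds_zero: assumes "smooth_algebra C" "section_module C G" "dual_section C G \<xi>"
  shows "\<xi> (\<lambda>_. 0) = (\<lambda>_. 0)"
proof -
  have "\<xi> (\<lambda>p. (\<lambda>_. 0) p + (\<lambda>_. 0) p) = (\<lambda>p. \<xi> (\<lambda>_. 0) p + \<xi> (\<lambda>_. 0) p)"
    by (rule ds_add[OF assms(1,3) G_zero[OF assms(2)] G_zero[OF assms(2)]])
  then have "\<And>p. \<xi> (\<lambda>_. 0) p = \<xi> (\<lambda>_. 0) p + \<xi> (\<lambda>_. 0) p" by (metis add.right_neutral)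
  then show ?thesis by force
qed
lemma ds_smul: assumes "smooth_algebra C" "section_module C G" "dual_section C G \<xi>" "f \<in> C" "y \<in> G"
  shows "\<xi> (\<lambda>p. f p *\<^sub>R y p) = (\<lambda>p. f p * \<xi> y p)"
  using ds_lin[OF assms(3,4,5) G_zero[OF assms(2)]] ds_zero[OF assms(1,2,3)] by simp
lemma ds_sum: assumes "smooth_algebra C" "section_module C G" "dual_section C G \<xi>" "finite S" "\<forall>i\<in>S. f i \<in> G"
  shows "\<xi> (\<lambda>p. \<Sum>i\<in>S. f i p) = (\<lambda>p. \<Sum>i\<in>S. \<xi> (f i) p)"
  using assms(4,5)
proof (induction S rule: finite_induct)
  case empty then show ?case using ds_zero[OF assms(1,2,3)] by simp
next
  case (insert x F)
  have "(\<lambda>p. \<Sum>i\<in>F. f i p) \<in> G" using G_sum[OF assms(2) insert(1)] insert(4) by simp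
  then show ?case using insert ds_add[OF assms(1,3), of "f x" "\<lambda>p. \<Sum>i\<in>F. f i p"] by simp
qed

lemma vf_in: "vector_field C x \<Longrightarrow> f \<in> C \<Longrightarrow> x f \<in> C" by (simp add: vector_field_def)
lemma vf_lin: "vector_field C x \<Longrightarrow> f \<in> C \<Longrightarrow> g \<in> C \<Longrightarrow> x (\<lambda>p. c * f p + g p) = (\<lambda>p. c * x f p + x g p)"
  by (simp add: vector_field_def)
lemma vf_mult: "vector_field C x \<Longrightarrow> f \<in> C \<Longrightarrow> g \<in> C \<Longrightarrow> x (\<lambda>p. f p * g p) = (\<lambda>p. f p * x g p + g p * x f p)"
  by (simp add: vector_field_def)
lemma vf_add: "vector_field C x \<Longrightarrow> f \<in> C \<Longrightarrow> g \<in> C \<Longrightarrow> x (\<lambda>p. f p + g p) = (\<lambda>p. x f p + x g p)"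
  using vf_lin[of C x f g 1] by simp
lemma vf_zero: assumes "smooth_algebra C" "vector_field C x" shows "x (\<lambda>_. 0) = (\<lambda>_. 0)"
proof -
  have "x (\<lambda>p. (\<lambda>_. 0) p + (\<lambda>_. 0) p) = (\<lambda>p. x (\<lambda>_. 0) p + x (\<lambda>_. 0) p)"
    by (rule vf_add[OF assms(2) C_const[OF assms(1)] C_const[OF assms(1)]])
  then have "\<And>p. x (\<lambda>_. 0) p = x (\<lambda>_. 0) p + x (\<lambda>_. 0) p" by (metis add.right_neutral)
  then show ?thesis by force
qed
lemma vf_sum: assumes "smooth_algebra C" "vector_field C x" "finite S" "\<forall>i\<in>S. f i \<in> C"
  shows "x (\<lambda>p. \<Sum>i\<in>S. f i p) = (\<lambda>p. \<Sum>i\<in>S. x (f i) p)"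
  using assms(3,4)
proof (induction S rule: finite_induct)
  case empty then show ?case using vf_zero[OF assms(1,2)] by simp
next
  case (insert x' F)
  have "(\<lambda>p. \<Sum>i\<in>F. f i p) \<in> C" using C_sum[OF assms(1) insert(1)] insert(4) by simp
  then show ?case using insert vf_add[OF assms(2), of "f x'" "\<lambda>p. \<Sum>i\<in>F. f i p"] by simp
qed

lemma cd_vf: "covariant_diff_op C G X xh \<Longrightarrow> vector_field C xh" by (simp add: covariant_diff_op_def)
lemma cd_in: "covariant_diff_op C G X xh \<Longrightarrow> y \<in> G \<Longrightarrow> X y \<in> G" by (simp add: covariant_diff_op_def)
lemma cd_lin: "covariant_diff_op C G X xh \<Longrightarrow> y \<in> G \<Longrightarrow> z \<in> G \<Longrightarrow>
   X (\<lambda>p. c *\<^sub>R y p + z p) = (\<lambda>p. c *\<^sub>R X y p + X z p)" by (simp add: covariant_diff_op_def)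
lemma cd_smul: "covariant_diff_op C G X xh \<Longrightarrow> f \<in> C \<Longrightarrow> y \<in> G \<Longrightarrow>
   X (\<lambda>p. f p *\<^sub>R y p) = (\<lambda>p. f p *\<^sub>R X y p + xh f p *\<^sub>R y p)"
  by (simp add: covariant_diff_op_def smul_def)

lemma alg:
 fixes Y Z H :: "nat \<Rightarrow> real" and P D E :: "nat\<Rightarrow>nat\<Rightarrow>real" and A :: "nat\<Rightarrow>nat\<Rightarrow>nat\<Rightarrow>real"
 assumes PP: "\<forall>i<n. \<forall>j<n. P i j - P j i = (\<Sum>k<n. (A j i k - A i j k) * H k)"
 shows "(\<Sum>j<n. (\<Sum>i<n. Y i * (D i j - (\<Sum>k<n. A i k j * Z k)) - Z i * (E i j - (\<Sum>k<n. A i k j * Y k))) * H j)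
   = (\<Sum>i<n. Y i * (\<Sum>j<n. Z j * P i j + H j * D i j)) - (\<Sum>i<n. Z i * (\<Sum>j<n. Y j * P i j + H j * E i j))"
proof -
  define S1 where "S1 = (\<Sum>i<n. \<Sum>j<n. Y i * D i j * H j)"
  define S2 where "S2 = (\<Sum>i<n. \<Sum>j<n. Z i * E i j * H j)"
  define T1 where "T1 = (\<Sum>i<n. \<Sum>j<n. \<Sum>k<n. Y i * A i k j * Z k * H j)"
  define T2 where "T2 = (\<Sum>i<n. \<Sum>j<n. \<Sum>k<n. Z i * A i k j * Y k * H j)"
  define Q where "Q = (\<Sum>i<n. \<Sum>j<n. Y i * Z j * (P i j - P j i))"
  have L: "(\<Sum>j<n. (\<Sum>i<n. Y i * (D i j - (\<Sum>k<n. A i k j * Z k)) - Z i * (E i j - (\<Sum>k<n. A i k j * Y k))) * H j)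
      = S1 - S2 - T1 + T2"
  proof -
    have "(\<Sum>j<n. (\<Sum>i<n. Y i * (D i j - (\<Sum>k<n. A i k j * Z k)) - Z i * (E i j - (\<Sum>k<n. A i k j * Y k))) * H j)
       = (\<Sum>j<n. \<Sum>i<n. Y i * D i j * H j - Z i * E i j * H j - (\<Sum>k<n. Y i * A i k j * Z k * H j) + (\<Sum>k<n. Z i * A i k j * Y k * H j))"
      by (simp add: sum_distrib_left sum_distrib_right algebra_simps sum_subtractf)
    also have "\<dots> = (\<Sum>i<n. \<Sum>j<n. Y i * D i j * H j - Z i * E i j * H j - (\<Sum>k<n. Y i * A i k j * Z k * H j) + (\<Sum>k<n. Z i * A i k j * Y k * H j))"
      by (rule sum.swap)
    also have "\<dots> = S1 - S2 - T1 + T2"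
      by (simp add: S1_def S2_def T1_def T2_def sum.distrib sum_subtractf)
    finally show ?thesis .
  qed
  have R: "(\<Sum>i<n. Y i * (\<Sum>j<n. Z j * P i j + H j * D i j)) - (\<Sum>i<n. Z i * (\<Sum>j<n. Y j * P i j + H j * E i j))
     = Q + S1 - S2"
  proof -
    have a: "(\<Sum>i<n. Y i * (\<Sum>j<n. Z j * P i j + H j * D i j)) = (\<Sum>i<n. \<Sum>j<n. Y i * Z j * P i j) + S1"
      by (simp add: S1_def sum_distrib_left sum.distrib algebra_simps)
    have b: "(\<Sum>i<n. Z i * (\<Sum>j<n. Y j * P i j + H j * E i j)) = (\<Sum>i<n. \<Sum>j<n. Z i * Y j * P i j) + S2"
      by (simp add: S2_def sum_distrib_left sum.distrib algebra_simps)
    have c: "(\<Sum>i<n. \<Sum>j<n. Z i * Y j * P i j) = (\<Sum>i<n. \<Sum>j<n. Y i * Z j * P j i)"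
      by (subst sum.swap) (simp add: algebra_simps)
    have d: "Q = (\<Sum>i<n. \<Sum>j<n. Y i * Z j * P i j) - (\<Sum>i<n. \<Sum>j<n. Y i * Z j * P j i)"
      by (simp add: Q_def algebra_simps sum_subtractf)
    show ?thesis using a b c d by simp
  qed
  have Q2: "Q = (\<Sum>i<n. \<Sum>j<n. \<Sum>k<n. Y i * Z j * A j i k * H k) - (\<Sum>i<n. \<Sum>j<n. \<Sum>k<n. Y i * Z j * A i j k * H k)"
  proof -
    have "Q = (\<Sum>i<n. \<Sum>j<n. Y i * Z j * (\<Sum>k<n. (A j i k - A i j k) * H k))"
      unfolding Q_def using PP by (intro sum.cong refl) simp
    also have "\<dots> = (\<Sum>i<n. \<Sum>j<n. \<Sum>k<n. Y i * Z j * A j i k * H k - Y i * Z j * A i j k * H k)"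
      by (simp add: sum_distrib_left algebra_simps)
    finally show ?thesis by (simp add: sum_subtractf)
  qed
  have T1': "T1 = (\<Sum>i<n. \<Sum>j<n. \<Sum>k<n. Y i * Z j * A i j k * H k)"
  proof -
    have "T1 = (\<Sum>i<n. \<Sum>k<n. \<Sum>j<n. Y i * A i k j * Z k * H j)"
      unfolding T1_def by (intro sum.cong refl sum.swap)
    then show ?thesis by (simp add: algebra_simps)
  qed
  have T2': "T2 = (\<Sum>i<n. \<Sum>j<n. \<Sum>k<n. Y i * Z j * A j i k * H k)"
  proof -
    have "T2 = (\<Sum>i<n. \<Sum>k<n. \<Sum>j<n. Z i * A i k j * Y k * H j)"
      unfolding T2_def by (intro sum.cong refl sum.swap)
    also have "\<dots> = (\<Sum>k<n. \<Sum>i<n. \<Sum>j<n. Z i * A i k j * Y k * H j)"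
      by (rule sum.swap)
    finally show ?thesis by (simp add: algebra_simps)
  qed
  show ?thesis using L R Q2 T1' T2' by simp
qed

theorem proposition2p10:
  fixes C :: "('m \<Rightarrow> real) set"
    and G :: "('m \<Rightarrow> 'v::real_vector) set"
    and n :: nat
    and \<xi> :: "nat \<Rightarrow> ('m \<Rightarrow> 'v) \<Rightarrow> ('m \<Rightarrow> real)"
    and X :: "nat \<Rightarrow> ('m \<Rightarrow> 'v) \<Rightarrow> ('m \<Rightarrow> 'v)"
    and xh :: "nat \<Rightarrow> ('m \<Rightarrow> real) \<Rightarrow> ('m \<Rightarrow> real)"
    and a :: "nat \<Rightarrow> nat \<Rightarrow> nat \<Rightarrow> ('m \<Rightarrow> real)"
  assumes C: "smooth_algebra C"
    and G: "section_module C G"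
    and xi: "\<forall>i<n. dual_section C G (\<xi> i)"
    and indep: "lin_indep_dual C G n \<xi>"
    and X: "\<forall>i<n. covariant_diff_op C G (X i) (xh i)"
    and a_smooth: "\<forall>i<n. \<forall>k<n. \<forall>j<n. a i k j \<in> C"
    and Xxi: "\<forall>i<n. \<forall>j<n. \<forall>y\<in>G.
               dual_action (X i) (xh i) (\<xi> j) y = (\<lambda>p. \<Sum>k<n. a i k j p * \<xi> k y p)"
    and brx: "\<forall>i<n. \<forall>j<n. vf_eq C (lie_bracket (xh i) (xh j))
               (\<lambda>f p. \<Sum>k<n. (a j i k p - a i j k p) * xh k f p)"
  shows "dull_algebroid C G
           (\<lambda>y z p. \<Sum>i<n. \<xi> i y p *\<^sub>R X i z p - \<xi> i z p *\<^sub>R X i y p)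
           (\<lambda>y f p. \<Sum>i<n. \<xi> i y p * xh i f p)"
proof -
  have xiC: "\<And>i y. i < n \<Longrightarrow> y \<in> G \<Longrightarrow> \<xi> i y \<in> C" using xi ds_in by blast
  have XG: "\<And>i y. i < n \<Longrightarrow> y \<in> G \<Longrightarrow> X i y \<in> G" using X cd_in by blast
  have vf: "\<And>i. i < n \<Longrightarrow> vector_field C (xh i)" using X cd_vf by blast
  have xhC: "\<And>i f. i < n \<Longrightarrow> f \<in> C \<Longrightarrow> xh i f \<in> C" using vf vf_in by blast
  have term_in: "\<And>i y z. i < n \<Longrightarrow> y \<in> G \<Longrightarrow> z \<in> G \<Longrightarrow>
      (\<lambda>p. \<xi> i y p *\<^sub>R X i z p - \<xi> i z p *\<^sub>R X i y p) \<in> G"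
    by (rule G_diff[OF C G]; rule G_smul[OF G]; simp add: xiC XG)
  have P1: "\<And>y z. y \<in> G \<Longrightarrow> z \<in> G \<Longrightarrow> (\<lambda>p. \<Sum>i<n. \<xi> i y p *\<^sub>R X i z p - \<xi> i z p *\<^sub>R X i y p) \<in> G"
    by (rule G_sum[OF G]) (auto intro: term_in)
  have P2: "\<And>y z. (\<lambda>p. \<Sum>i<n. \<xi> i y p *\<^sub>R X i z p - \<xi> i z p *\<^sub>R X i y p)
      = (\<lambda>p. - (\<Sum>i<n. \<xi> i z p *\<^sub>R X i y p - \<xi> i y p *\<^sub>R X i z p))"
    by (rule ext) (simp add: sum_subtractf)
  have P3: "\<And>c y y' z. y \<in> G \<Longrightarrow> y' \<in> G \<Longrightarrow> z \<in> G \<Longrightarrow>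
     (\<lambda>p. \<Sum>i<n. \<xi> i (\<lambda>p. c *\<^sub>R y p + y' p) p *\<^sub>R X i z p - \<xi> i z p *\<^sub>R X i (\<lambda>p. c *\<^sub>R y p + y' p) p)
     = (\<lambda>p. c *\<^sub>R (\<Sum>i<n. \<xi> i y p *\<^sub>R X i z p - \<xi> i z p *\<^sub>R X i y p) + (\<Sum>i<n. \<xi> i y' p *\<^sub>R X i z p - \<xi> i z p *\<^sub>R X i y' p))"
  proof (rule ext)
    fix c y y' z p assume yG: "y \<in> G" and y'G: "y' \<in> G" and zG: "z \<in> G"
    have "(\<Sum>i<n. \<xi> i (\<lambda>p. c *\<^sub>R y p + y' p) p *\<^sub>R X i z p - \<xi> i z p *\<^sub>R X i (\<lambda>p. c *\<^sub>R y p + y' p) p)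
       = (\<Sum>i<n. c *\<^sub>R (\<xi> i y p *\<^sub>R X i z p - \<xi> i z p *\<^sub>R X i y p) + (\<xi> i y' p *\<^sub>R X i z p - \<xi> i z p *\<^sub>R X i y' p))"
    proof (rule sum.cong[OF refl])
      fix i assume "i \<in> {..<n}" then have i: "i < n" by simp
      have e1: "\<xi> i (\<lambda>p. c *\<^sub>R y p + y' p) = (\<lambda>p. c * \<xi> i y p + \<xi> i y' p)"
        using ds_lin[OF xi[rule_format, OF i] C_const[OF C, of c] yG y'G] by simp
      have e2: "X i (\<lambda>p. c *\<^sub>R y p + y' p) = (\<lambda>p. c *\<^sub>R X i y p + X i y' p)"
        using cd_lin[OF X[rule_format, OF i] yG y'G] by simp
      show "\<xi> i (\<lambda>p. c *\<^sub>R y p + y' p) p *\<^sub>R X i z p - \<xi> i z p *\<^sub>R X i (\<lambda>p. c *\<^sub>R y p + y' p) p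
        = c *\<^sub>R (\<xi> i y p *\<^sub>R X i z p - \<xi> i z p *\<^sub>R X i y p) + (\<xi> i y' p *\<^sub>R X i z p - \<xi> i z p *\<^sub>R X i y' p)"
        unfolding e1 e2 by (simp add: algebra_simps)
    qed
    also have "\<dots> = c *\<^sub>R (\<Sum>i<n. \<xi> i y p *\<^sub>R X i z p - \<xi> i z p *\<^sub>R X i y p) + (\<Sum>i<n. \<xi> i y' p *\<^sub>R X i z p - \<xi> i z p *\<^sub>R X i y' p)"
      by (simp add: sum.distrib scaleR_sum_right)
    finally show "(\<Sum>i<n. \<xi> i (\<lambda>p. c *\<^sub>R y p + y' p) p *\<^sub>R X i z p - \<xi> i z p *\<^sub>R X i (\<lambda>p. c *\<^sub>R y p + y' p) p)
       = c *\<^sub>R (\<Sum>i<n. \<xi> i y p *\<^sub>R X i z p - \<xi> i z p *\<^sub>R X i y p) + (\<Sum>i<n. \<xi> i y' p *\<^sub>R X i z p - \<xi> i z p *\<^sub>R X i y' p)" .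
  qed
  have P4: "\<And>c y z z'. y \<in> G \<Longrightarrow> z \<in> G \<Longrightarrow> z' \<in> G \<Longrightarrow>
     (\<lambda>p. \<Sum>i<n. \<xi> i y p *\<^sub>R X i (\<lambda>p. c *\<^sub>R z p + z' p) p - \<xi> i (\<lambda>p. c *\<^sub>R z p + z' p) p *\<^sub>R X i y p)
     = (\<lambda>p. c *\<^sub>R (\<Sum>i<n. \<xi> i y p *\<^sub>R X i z p - \<xi> i z p *\<^sub>R X i y p) + (\<Sum>i<n. \<xi> i y p *\<^sub>R X i z' p - \<xi> i z' p *\<^sub>R X i y p))"
  proof -
    fix c y z z' assume yG: "y \<in> G" and zG: "z \<in> G" and z'G: "z' \<in> G"
    have "(\<lambda>p. \<Sum>i<n. \<xi> i y p *\<^sub>R X i (\<lambda>p. c *\<^sub>R z p + z' p) p - \<xi> i (\<lambda>p. c *\<^sub>R z p + z' p) p *\<^sub>R X i y p)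
      = (\<lambda>p. - (\<Sum>i<n. \<xi> i (\<lambda>p. c *\<^sub>R z p + z' p) p *\<^sub>R X i y p - \<xi> i y p *\<^sub>R X i (\<lambda>p. c *\<^sub>R z p + z' p) p))"
      by (rule P2)
    also have "\<dots> = (\<lambda>p. - (c *\<^sub>R (\<Sum>i<n. \<xi> i z p *\<^sub>R X i y p - \<xi> i y p *\<^sub>R X i z p) + (\<Sum>i<n. \<xi> i z' p *\<^sub>R X i y p - \<xi> i y p *\<^sub>R X i z' p)))"
      using P3[OF zG z'G yG, of c] by metis
    also have "\<dots> = (\<lambda>p. c *\<^sub>R (\<Sum>i<n. \<xi> i y p *\<^sub>R X i z p - \<xi> i z p *\<^sub>R X i y p) + (\<Sum>i<n. \<xi> i y p *\<^sub>R X i z' p - \<xi> i z' p *\<^sub>R X i y p))"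
      by (rule ext) (simp add: sum_subtractf algebra_simps)
    finally show "?thesis c y z z'" .
  qed
  show ?thesis
    unfolding dull_algebroid_def
  proof (intro conjI ballI allI)
    show "\<And>y z. y \<in> G \<Longrightarrow> z \<in> G \<Longrightarrow> (\<lambda>p. \<Sum>i<n. \<xi> i y p *\<^sub>R X i z p - \<xi> i z p *\<^sub>R X i y p) \<in> G" by (rule P1)
  next
    fix y z show "(\<lambda>p. \<Sum>i<n. \<xi> i y p *\<^sub>R X i z p - \<xi> i z p *\<^sub>R X i y p) =
              (\<lambda>p. - (\<Sum>i<n. \<xi> i z p *\<^sub>R X i y p - \<xi> i y p *\<^sub>R X i z p))" by (rule P2)
  next
    fix c y y' z assume "y \<in> G" "y' \<in> G" "z \<in> G" then show
      "(\<lambda>p. \<Sum>i<n. \<xi> i (\<lambda>p. c *\<^sub>R y p + y' p) p *\<^sub>R X i z p - \<xi> i z p *\<^sub>R X i (\<lambda>p. c *\<^sub>R y p + y' p) p)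
     = (\<lambda>p. c *\<^sub>R (\<Sum>i<n. \<xi> i y p *\<^sub>R X i z p - \<xi> i z p *\<^sub>R X i y p) + (\<Sum>i<n. \<xi> i y' p *\<^sub>R X i z p - \<xi> i z p *\<^sub>R X i y' p))"
      by (rule P3)
  next
    fix c y z z' assume "y \<in> G" "z \<in> G" "z' \<in> G" then show
     "(\<lambda>p. \<Sum>i<n. \<xi> i y p *\<^sub>R X i (\<lambda>p. c *\<^sub>R z p + z' p) p - \<xi> i (\<lambda>p. c *\<^sub>R z p + z' p) p *\<^sub>R X i y p)
     = (\<lambda>p. c *\<^sub>R (\<Sum>i<n. \<xi> i y p *\<^sub>R X i z p - \<xi> i z p *\<^sub>R X i y p) + (\<Sum>i<n. \<xi> i y p *\<^sub>R X i z' p - \<xi> i z' p *\<^sub>R X i y p))"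
      by (rule P4)
  next
    fix y assume yG: "y \<in> G"
    show "vector_field C (\<lambda>f p. \<Sum>i<n. \<xi> i y p * xh i f p)"
      unfolding vector_field_def
    proof (intro conjI ballI allI)
      fix f assume "f \<in> C" then show "(\<lambda>p. \<Sum>i<n. \<xi> i y p * xh i f p) \<in> C"
        by (intro C_sum[OF C]) (auto intro: C_mult[OF C] xiC[OF _ yG] xhC)
    next
      fix c f g assume fC: "f \<in> C" and gC: "g \<in> C"
      show "(\<lambda>p. \<Sum>i<n. \<xi> i y p * xh i (\<lambda>p. c * f p + g p) p) =
           (\<lambda>p. c * (\<Sum>i<n. \<xi> i y p * xh i f p) + (\<Sum>i<n. \<xi> i y p * xh i g p))"
      proof (rule ext)
        fix p
        have "(\<Sum>i<n. \<xi> i y p * xh i (\<lambda>p. c * f p + g p) p) = (\<Sum>i<n. c * (\<xi> i y p * xh i f p) + \<xi> i y p * xh i g p)"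
          proof (rule sum.cong[OF refl])
          fix i assume "i \<in> {..<n}" then have i: "i < n" by simp
          show "\<xi> i y p * xh i (\<lambda>p. c * f p + g p) p = c * (\<xi> i y p * xh i f p) + \<xi> i y p * xh i g p"
            unfolding vf_lin[OF vf[OF i] fC gC] by (simp add: algebra_simps)
        qed
        then show "(\<Sum>i<n. \<xi> i y p * xh i (\<lambda>p. c * f p + g p) p) = c * (\<Sum>i<n. \<xi> i y p * xh i f p) + (\<Sum>i<n. \<xi> i y p * xh i g p)"
          by (simp add: sum.distrib sum_distrib_left)
      qed
    next
      fix f g assume fC: "f \<in> C" and gC: "g \<in> C"
      show "(\<lambda>p. \<Sum>i<n. \<xi> i y p * xh i (\<lambda>p. f p * g p) p) =
           (\<lambda>p. f p * (\<Sum>i<n. \<xi> i y p * xh i g p) + g p * (\<Sum>i<n. \<xi> i y p * xh i f p))"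
      proof (rule ext)
        fix p
        have "(\<Sum>i<n. \<xi> i y p * xh i (\<lambda>p. f p * g p) p) = (\<Sum>i<n. f p * (\<xi> i y p * xh i g p) + g p * (\<xi> i y p * xh i f p))"
          proof (rule sum.cong[OF refl])
          fix i assume "i \<in> {..<n}" then have i: "i < n" by simp
          show "\<xi> i y p * xh i (\<lambda>p. f p * g p) p = f p * (\<xi> i y p * xh i g p) + g p * (\<xi> i y p * xh i f p)"
            unfolding vf_mult[OF vf[OF i] fC gC] by (simp add: algebra_simps)
        qed
        then show "(\<Sum>i<n. \<xi> i y p * xh i (\<lambda>p. f p * g p) p) = f p * (\<Sum>i<n. \<xi> i y p * xh i g p) + g p * (\<Sum>i<n. \<xi> i y p * xh i f p)"
          by (simp add: sum.distrib sum_distrib_left)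
      qed
    qed
  next
    fix f y z assume fC: "f \<in> C" and yG: "y \<in> G" and zG: "z \<in> G"
    show "vf_eq C (\<lambda>fa p. \<Sum>i<n. \<xi> i (\<lambda>p. f p *\<^sub>R y p + z p) p * xh i fa p)
            (\<lambda>g p. f p * (\<Sum>i<n. \<xi> i y p * xh i g p) + (\<Sum>i<n. \<xi> i z p * xh i g p))"
      unfolding vf_eq_def
    proof (intro ballI ext)
      fix g p
      have "(\<Sum>i<n. \<xi> i (\<lambda>p. f p *\<^sub>R y p + z p) p * xh i g p) = (\<Sum>i<n. f p * (\<xi> i y p * xh i g p) + \<xi> i z p * xh i g p)"
        proof (rule sum.cong[OF refl])
        fix i assume "i \<in> {..<n}" then have i: "i < n" by simp
        show "\<xi> i (\<lambda>p. f p *\<^sub>R y p + z p) p * xh i g p = f p * (\<xi> i y p * xh i g p) + \<xi> i z p * xh i g p"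
          unfolding ds_lin[OF xi[rule_format, OF i] fC yG zG] by (simp add: algebra_simps)
      qed
      then show "(\<Sum>i<n. \<xi> i (\<lambda>p. f p *\<^sub>R y p + z p) p * xh i g p) = f p * (\<Sum>i<n. \<xi> i y p * xh i g p) + (\<Sum>i<n. \<xi> i z p * xh i g p)"
        by (simp add: sum.distrib sum_distrib_left)
    qed
  next
    fix f y z assume fC: "f \<in> C" and yG: "y \<in> G" and zG: "z \<in> G"
    show "(\<lambda>p. \<Sum>i<n. \<xi> i y p *\<^sub>R X i (smul f z) p - \<xi> i (smul f z) p *\<^sub>R X i y p) =
           (\<lambda>p. f p *\<^sub>R (\<Sum>i<n. \<xi> i y p *\<^sub>R X i z p - \<xi> i z p *\<^sub>R X i y p) + (\<Sum>i<n. \<xi> i y p * xh i f p) *\<^sub>R z p)"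
    proof (rule ext)
      fix p
      have "(\<Sum>i<n. \<xi> i y p *\<^sub>R X i (smul f z) p - \<xi> i (smul f z) p *\<^sub>R X i y p)
         = (\<Sum>i<n. f p *\<^sub>R (\<xi> i y p *\<^sub>R X i z p - \<xi> i z p *\<^sub>R X i y p) + (\<xi> i y p * xh i f p) *\<^sub>R z p)"
      proof (rule sum.cong[OF refl])
        fix i assume "i \<in> {..<n}" then have i: "i < n" by simp
        show "\<xi> i y p *\<^sub>R X i (smul f z) p - \<xi> i (smul f z) p *\<^sub>R X i y p
          = f p *\<^sub>R (\<xi> i y p *\<^sub>R X i z p - \<xi> i z p *\<^sub>R X i y p) + (\<xi> i y p * xh i f p) *\<^sub>R z p"
          unfolding smul_def ds_smul[OF C G xi[rule_format, OF i] fC zG] cd_smul[OF X[rule_format, OF i] fC zG]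
          by (simp add: algebra_simps)
      qed
      then show "(\<Sum>i<n. \<xi> i y p *\<^sub>R X i (smul f z) p - \<xi> i (smul f z) p *\<^sub>R X i y p)
         = f p *\<^sub>R (\<Sum>i<n. \<xi> i y p *\<^sub>R X i z p - \<xi> i z p *\<^sub>R X i y p) + (\<Sum>i<n. \<xi> i y p * xh i f p) *\<^sub>R z p"
        by (simp add: sum.distrib scaleR_sum_right scaleR_sum_left)
    qed
  next
    fix y z assume yG: "y \<in> G" and zG: "z \<in> G"
    show "vf_eq C (\<lambda>f p. \<Sum>i<n. \<xi> i (\<lambda>p. \<Sum>i<n. \<xi> i y p *\<^sub>R X i z p - \<xi> i z p *\<^sub>R X i y p) p * xh i f p)
               (lie_bracket (\<lambda>f p. \<Sum>i<n. \<xi> i y p * xh i f p) (\<lambda>f p. \<Sum>i<n. \<xi> i z p * xh i f p))"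
      unfolding vf_eq_def lie_bracket_def
    proof (intro ballI ext)
      fix g p assume gC: "g \<in> C"
      have hX: "\<xi> j (X i w) p = xh i (\<xi> j w) p - (\<Sum>k<n. a i k j p * \<xi> k w p)"
        if "i < n" "j < n" "w \<in> G" for i j w
        using fun_cong[OF Xxi[rule_format, OF that], of p] unfolding dual_action_def by simp
      have hb: "\<xi> j (\<lambda>p. \<Sum>i<n. \<xi> i y p *\<^sub>R X i z p - \<xi> i z p *\<^sub>R X i y p) p
          = (\<Sum>i<n. \<xi> i y p * (xh i (\<xi> j z) p - (\<Sum>k<n. a i k j p * \<xi> k z p))
                   - \<xi> i z p * (xh i (\<xi> j y) p - (\<Sum>k<n. a i k j p * \<xi> k y p)))" if j: "j < n" for j
      proof -
        have "\<xi> j (\<lambda>p. \<Sum>i<n. \<xi> i y p *\<^sub>R X i z p - \<xi> i z p *\<^sub>R X i y p) p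
          = (\<Sum>i<n. \<xi> j (\<lambda>p. \<xi> i y p *\<^sub>R X i z p - \<xi> i z p *\<^sub>R X i y p) p)"
          using ds_sum[OF C G xi[rule_format, OF j], of "{..<n}" "\<lambda>i p. \<xi> i y p *\<^sub>R X i z p - \<xi> i z p *\<^sub>R X i y p"]
            term_in[OF _ yG zG] by simp
        also have "\<dots> = (\<Sum>i<n. \<xi> i y p * (xh i (\<xi> j z) p - (\<Sum>k<n. a i k j p * \<xi> k z p))
                   - \<xi> i z p * (xh i (\<xi> j y) p - (\<Sum>k<n. a i k j p * \<xi> k y p)))"
        proof (rule sum.cong[OF refl])
          fix i assume "i \<in> {..<n}" then have i: "i < n" by simp
          have s1: "(\<lambda>p. \<xi> i y p *\<^sub>R X i z p) \<in> G" by (rule G_smul[OF G xiC[OF i yG] XG[OF i zG]])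
          have s2: "(\<lambda>p. \<xi> i z p *\<^sub>R X i y p) \<in> G" by (rule G_smul[OF G xiC[OF i zG] XG[OF i yG]])
          show "\<xi> j (\<lambda>p. \<xi> i y p *\<^sub>R X i z p - \<xi> i z p *\<^sub>R X i y p) p = \<xi> i y p * (xh i (\<xi> j z) p - (\<Sum>k<n. a i k j p * \<xi> k z p))
                   - \<xi> i z p * (xh i (\<xi> j y) p - (\<Sum>k<n. a i k j p * \<xi> k y p))"
            unfolding ds_diff[OF C xi[rule_format, OF j] s1 s2]
              ds_smul[OF C G xi[rule_format, OF j] xiC[OF i yG] XG[OF i zG]]
              ds_smul[OF C G xi[rule_format, OF j] xiC[OF i zG] XG[OF i yG]]
            using hX[OF i j zG] hX[OF i j yG] by simp
        qed
        finally show ?thesis .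
      qed
      have hxh: "xh i (\<lambda>p. \<Sum>j<n. \<xi> j w p * xh j g p) p = (\<Sum>j<n. \<xi> j w p * xh i (xh j g) p + xh j g p * xh i (\<xi> j w) p)"
        if i: "i < n" and w: "w \<in> G" for i w
      proof -
        have "xh i (\<lambda>p. \<Sum>j<n. \<xi> j w p * xh j g p) p = (\<Sum>j<n. xh i (\<lambda>p. \<xi> j w p * xh j g p) p)"
          using vf_sum[OF C vf[OF i], of "{..<n}" "\<lambda>j p. \<xi> j w p * xh j g p"]
            C_mult[OF C xiC[OF _ w] xhC[OF _ gC]] by simp
        also have "\<dots> = (\<Sum>j<n. \<xi> j w p * xh i (xh j g) p + xh j g p * xh i (\<xi> j w) p)"
          proof (rule sum.cong[OF refl])
          fix j assume "j \<in> {..<n}" then have j: "j < n" by simp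
          show "xh i (\<lambda>p. \<xi> j w p * xh j g p) p = \<xi> j w p * xh i (xh j g) p + xh j g p * xh i (\<xi> j w) p"
            unfolding vf_mult[OF vf[OF i] xiC[OF j w] xhC[OF j gC]] by simp
        qed
        finally show ?thesis .
      qed
      have PP: "\<forall>i<n. \<forall>j<n. xh i (xh j g) p - xh j (xh i g) p = (\<Sum>k<n. (a j i k p - a i j k p) * xh k g p)"
        using brx gC unfolding vf_eq_def lie_bracket_def by (metis (no_types, lifting))
      have "(\<Sum>j<n. \<xi> j (\<lambda>p. \<Sum>i<n. \<xi> i y p *\<^sub>R X i z p - \<xi> i z p *\<^sub>R X i y p) p * xh j g p)
         = (\<Sum>j<n. (\<Sum>i<n. \<xi> i y p * (xh i (\<xi> j z) p - (\<Sum>k<n. a i k j p * \<xi> k z p))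
                   - \<xi> i z p * (xh i (\<xi> j y) p - (\<Sum>k<n. a i k j p * \<xi> k y p))) * xh j g p)"
        by (rule sum.cong[OF refl]) (simp add: hb)
      also have "\<dots> = (\<Sum>i<n. \<xi> i y p * (\<Sum>j<n. \<xi> j z p * xh i (xh j g) p + xh j g p * xh i (\<xi> j z) p))
          - (\<Sum>i<n. \<xi> i z p * (\<Sum>j<n. \<xi> j y p * xh i (xh j g) p + xh j g p * xh i (\<xi> j y) p))"
        by (rule alg[OF PP])
      also have "\<dots> = (\<Sum>i<n. \<xi> i y p * xh i (\<lambda>p. \<Sum>j<n. \<xi> j z p * xh j g p) p)
          - (\<Sum>i<n. \<xi> i z p * xh i (\<lambda>p. \<Sum>j<n. \<xi> j y p * xh j g p) p)"
        using hxh[OF _ yG] hxh[OF _ zG] by simp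
      finally show "(\<Sum>j<n. \<xi> j (\<lambda>p. \<Sum>i<n. \<xi> i y p *\<^sub>R X i z p - \<xi> i z p *\<^sub>R X i y p) p * xh j g p)
         = (\<Sum>i<n. \<xi> i y p * xh i (\<lambda>p. \<Sum>j<n. \<xi> j z p * xh j g p) p)
          - (\<Sum>i<n. \<xi> i z p * xh i (\<lambda>p. \<Sum>j<n. \<xi> j y p * xh j g p) p)" .
    qed
  qed
qed
end
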